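(* Let $c,o$ be vertices such that there is a directed path from $c$ to $o$. Put $\delta=\delta_{co}$, and let $\vartheta_{co}$ be the sum of the weights of all shortest directed paths from $c$ to $o$. Let $h(s)=e_o^T\operatorname{adj}(sI+L)e_c$. Then $h$ has degree exactly $N-1-\delta$ and leading coefficient $\vartheta_{co}$, so that $h(s)=\vartheta_{co}\prod_{i=1}^{N-1-\delta}(s+\gamma_i)$ for some $\gamma_1,\dots,\gamma_{N-1-\delta}\in\mathbb C$. Moreover, as rational functions of $s$, $$T_{co}(s)=\vartheta_{co}\,\frac{\big(b(s)q(s)\big)^{1+\delta}\prod_{i=1}^{N-1-\delta}\big(a(s)p(s)+\gamma_i\, b(s)q(s)\big)}{\prod_{i=1}^{N}\big(a(s)p(s)+\lambda_i\, b(s)q(s)\big)},$$ where $\lambda_1,\dots,\lambda_N$ are the eigenvalues of $L$ listed with algebraic multiplicity.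
   Context: Setup (graph). $\mathcal G$ is a weighted directed graph on $\{1,\dots,N\}$ with adjacency matrix $A=[a_{ij}]$. Here $a_{ij}>0$ if there is an arc from $j$ to $i$ (of weight $a_{ij}$), and $a_{ij}=0$ otherwise; there are no self-loops. The Laplacian is $L=D-A$ with $D=\mathrm{diag}(\sum_j a_{ij})$. A directed path from $u$ to $w$ is a sequence of distinct vertices $u=v_0,\dots,v_\ell=w$ with an arc from $v_k$ to $v_{k+1}$ for each $k$. Its length is $\ell$ and its weight is the product of its arc weights (empty product $=1$). $\delta_{uw}$ is the length of a shortest directed path from $u$ to $w$. $e_i$ is the $i$-th canonical basis vector. Setup (agents). Let $a,b,p,q$ be nonzero real polynomials. The open loop is $M(s)=\frac{b(s)q(s)}{a(s)p(s)}$, with plant $G=b/a$ and controller $R=q/p$. The network is $y(s)=M(s)\big[-Ly(s)+r(s)\big]$, where $y,r$ are vectors in $\mathbb C^N$ of signals. $T_{co}(s)$ is the transfer function from the input $r_c$ to the output $y_o$ when all other inputs are zero, i.e. $T_{co}(s)=e_o^T\big(I+M(s)L\big)^{-1}M(s)e_c$ as a rational function. *)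

theory Defs
  imports "Jordan_Normal_Form.Char_Poly" "HOL-Computational_Algebra.Fraction_Field"
begin

text \<open>Graph on vertices 0..N-1 (the paper's 1..N shifted by one), given by the
  adjacency matrix A; A(i,j) > 0 means an arc from j to i of weight A(i,j).\<close>

definition laplacian :: "real mat \<Rightarrow> real mat" where
  "laplacian A = mat (dim_row A) (dim_col A)
     (\<lambda>(i,j). (if i = j then (\<Sum>k<dim_col A. A $$ (i,k)) else 0) - A $$ (i,j))"

definition is_dpath :: "nat \<Rightarrow> real mat \<Rightarrow> nat \<Rightarrow> nat \<Rightarrow> nat list \<Rightarrow> bool" where
  "is_dpath N A u w vs \<longleftrightarrow> vs \<noteq> [] \<and> hd vs = u \<and> last vs = w \<and> distinct vs
     \<and> set vs \<subseteq> {..<N} \<and> (\<forall>k < length vs - 1. A $$ (vs ! (k+1), vs ! k) > 0)"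

definition path_len :: "nat list \<Rightarrow> nat" where
  "path_len vs = length vs - 1"

definition path_weight :: "real mat \<Rightarrow> nat list \<Rightarrow> real" where
  "path_weight A vs = (\<Prod>k < length vs - 1. A $$ (vs ! (k+1), vs ! k))"

definition shortest_dist :: "nat \<Rightarrow> real mat \<Rightarrow> nat \<Rightarrow> nat \<Rightarrow> nat" where
  "shortest_dist N A u w = (LEAST l. \<exists>vs. is_dpath N A u w vs \<and> path_len vs = l)"

definition shortest_weight_sum :: "nat \<Rightarrow> real mat \<Rightarrow> nat \<Rightarrow> nat \<Rightarrow> real" where
  "shortest_weight_sum N A u w =
     (\<Sum>vs \<in> {vs. is_dpath N A u w vs \<and> path_len vs = shortest_dist N A u w}. path_weight A vs)"

definition sI_plus :: "real mat \<Rightarrow> real poly mat" where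
  "sI_plus L = [:0,1:] \<cdot>\<^sub>m 1\<^sub>m (dim_row L) + map_mat (\<lambda>x. [:x:]) L"

definition rf :: "real poly \<Rightarrow> complex poly fract" where
  "rf f = Fract (map_poly complex_of_real f) 1"

definition cf :: "complex poly \<Rightarrow> complex poly fract" where
  "cf f = Fract f 1"

end

theory Submission
  imports Defs
begin



lemma dpath_len_le:
  assumes "is_dpath N A u w vs" shows "length vs \<le> N"
proof -
  have "card (set vs) \<le> card {..<N}" using assms unfolding is_dpath_def by (intro card_mono) auto
  thus ?thesis using assms distinct_card unfolding is_dpath_def by fastforce
qed

lemma dpath_finite: "finite {vs. is_dpath N A u w vs \<and> P vs}"
proof -
  have "{vs. is_dpath N A u w vs \<and> P vs} \<subseteq> {xs. set xs \<subseteq> {..<N} \<and> length xs \<le> N}"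
    using dpath_len_le unfolding is_dpath_def by blast
  thus ?thesis using finite_lists_length_le[of "{..<N}" N] finite_subset by blast
qed

lemma dpath_prefix:
  assumes "is_dpath N A u w vs" "k < length vs"
  shows "is_dpath N A u (vs ! k) (take (Suc k) vs) \<and> path_len (take (Suc k) vs) = k"
  using assms unfolding is_dpath_def path_len_def
  apply (auto simp: hd_conv_nth last_conv_nth min_def dest: in_set_takeD)
  subgoal premises p proof -
    have "k = length vs - Suc 0" using p by linarith
    thus ?thesis by simp
  qed
  done

lemma dpath_extend:
  assumes "is_dpath N A u j vs" "i < N" "i \<notin> set vs" "A $$ (i, j) > 0"
  shows "is_dpath N A u i (vs @ [i]) \<and> path_len (vs @ [i]) = Suc (path_len vs)
     \<and> path_weight A (vs @ [i]) = A $$ (i, j) * path_weight A vs"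
proof -
  have ne: "vs \<noteq> []" and lv: "last vs = j" using assms unfolding is_dpath_def by auto
  have lv': "vs ! (length vs - 1) = j" using ne lv by (simp add: last_conv_nth)
  have 1: "is_dpath N A u i (vs @ [i])"
    unfolding is_dpath_def
  proof (intro conjI allI impI)
    fix k assume k: "k < length (vs @ [i]) - 1"
    show "0 < A $$ ((vs @ [i]) ! (k + 1), (vs @ [i]) ! k)"
    proof (cases "k < length vs - 1")
      case True
      hence "Suc k < length vs" by linarith
      then show ?thesis using assms(1) True unfolding is_dpath_def by (simp add: nth_append)
    next
      case False
      hence "k = length vs - 1" using k by simp
      then show ?thesis using assms(4) lv' ne by (simp add: nth_append)
    qed
  qed (use assms ne in \<open>auto simp: is_dpath_def\<close>)
  have "path_weight A (vs @ [i]) = (\<Prod>k < Suc (length vs - 1). A $$ ((vs@[i]) ! (k+1), (vs@[i]) ! k))"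
    unfolding path_weight_def using ne by simp
  also have "\<dots> = A $$ (i, j) * path_weight A vs"
    unfolding prod.lessThan_Suc path_weight_def using ne lv'
    by (auto simp: nth_append intro!: prod.cong)
  finally show ?thesis using 1 ne unfolding path_len_def by auto
qed

lemma dpath_notin:
  assumes "is_dpath N A u j vs" "\<forall>ws. is_dpath N A u i ws \<longrightarrow> path_len ws > path_len vs"
  shows "i \<notin> set vs"
proof
  assume "i \<in> set vs"
  then obtain k where k: "k < length vs" "vs ! k = i" by (auto simp: in_set_conv_nth)
  from dpath_prefix[OF assms(1) k(1)] k have "is_dpath N A u i (take (Suc k) vs)" "path_len (take (Suc k) vs) = k"
    by auto
  with assms(2) have "k > path_len vs" by auto
  with k show False unfolding path_len_def by auto
qed

lemma dpath_decomp:
  assumes "is_dpath N A u i vs" "path_len vs = Suc m"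
  shows "vs = butlast vs @ [i] \<and> is_dpath N A u (last (butlast vs)) (butlast vs)
    \<and> path_len (butlast vs) = m \<and> A $$ (i, last (butlast vs)) > 0 \<and> last (butlast vs) < N"
proof -
  have len: "length vs = Suc (Suc m)" using assms(2) unfolding path_len_def by simp
  have bl: "butlast vs = take (Suc m) vs" using len by (simp add: butlast_conv_take)
  have pre: "is_dpath N A u (vs ! m) (take (Suc m) vs)" "path_len (take (Suc m) vs) = m"
    using dpath_prefix[OF assms(1), of m] len by auto
  have lastbl: "last (butlast vs) = vs ! m" using bl len by (simp add: take_Suc_conv_app_nth)
  have ne: "vs \<noteq> []" using len by auto
  have lasti: "last vs = i" "vs ! Suc m = i" using assms(1) ne len unfolding is_dpath_def by (auto simp: last_conv_nth)
  have arc: "A $$ (vs ! Suc m, vs ! m) > 0" using assms(1) len unfolding is_dpath_def by auto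
  have "vs ! m \<in> set vs" using len by (intro nth_mem) simp
  hence "vs ! m < N" using assms(1) unfolding is_dpath_def by auto
  then show ?thesis using pre bl lastbl lasti arc ne append_butlast_last_id[OF ne] by auto
qed

lemma pow_mat_Suc_left: assumes "B \<in> carrier_mat n n" shows "B ^\<^sub>m Suc k = B * B ^\<^sub>m k"
proof (induction k)
  case 0 then show ?case using assms by simp
next
  case (Suc k)
  have "B ^\<^sub>m Suc (Suc k) = (B * B ^\<^sub>m k) * B" using Suc by simp
  also have "\<dots> = B * (B ^\<^sub>m k * B)" using assms by (intro assoc_mult_mat) auto
  finally show ?case by simp
qed

lemma mult_entry: assumes "X \<in> carrier_mat n n" "Y \<in> carrier_mat n n" "i < n" "j < n"
  shows "(X * Y) $$ (i, j) = (\<Sum>k<n. X $$ (i, k) * Y $$ (k, j))"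
  using assms by (simp add: scalar_prod_def atLeast0LessThan)

lemma laplacian_carrier: "A \<in> carrier_mat N N \<Longrightarrow> laplacian A \<in> carrier_mat N N"
  unfolding laplacian_def by auto

lemma laplacian_index: "A \<in> carrier_mat N N \<Longrightarrow> i < N \<Longrightarrow> j < N \<Longrightarrow>
  laplacian A $$ (i, j) = (if i = j then (\<Sum>k<N. A $$ (i, k)) else 0) - A $$ (i, j)"
  unfolding laplacian_def by auto

context
  fixes N :: nat and A :: "real mat" and c :: nat
  assumes A_dim: "A \<in> carrier_mat N N"
    and A_nonneg: "\<forall>i<N. \<forall>j<N. A $$ (i, j) \<ge> 0"
    and c_lt: "c < N"
begin

definition Pset :: "nat \<Rightarrow> nat \<Rightarrow> nat list set" where
  "Pset i m = {vs. is_dpath N A c i vs \<and> path_len vs = m}"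

definition fw :: "nat \<Rightarrow> nat \<Rightarrow> real" where
  "fw m i = (\<Sum>vs\<in>Pset i m. path_weight A vs)"

lemma Pset_finite: "finite (Pset i m)"
  unfolding Pset_def by (rule dpath_finite)

lemma fw_rec:
  assumes i: "i < N" and nop: "\<forall>vs. is_dpath N A c i vs \<longrightarrow> path_len vs > m"
  shows "fw (Suc m) i = (\<Sum>j<N. A $$ (i, j) * fw m j)"
proof -
  define J where "J = {j. j < N \<and> A $$ (i, j) > 0}"
  have finJ: "finite J" unfolding J_def by auto
  have notin: "i \<notin> set vs" if "vs \<in> Pset j m" for vs j
    using dpath_notin[of N A c j vs i] that nop unfolding Pset_def by auto
  have seteq: "Pset i (Suc m) = (\<lambda>vs. vs @ [i]) ` (\<Union>j\<in>J. Pset j m)"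
  proof
    show "Pset i (Suc m) \<subseteq> (\<lambda>vs. vs @ [i]) ` (\<Union>j\<in>J. Pset j m)"
    proof
      fix vs assume "vs \<in> Pset i (Suc m)"
      hence "is_dpath N A c i vs" "path_len vs = Suc m" unfolding Pset_def by auto
      from dpath_decomp[OF this] show "vs \<in> (\<lambda>vs. vs @ [i]) ` (\<Union>j\<in>J. Pset j m)"
        unfolding J_def Pset_def by (intro image_eqI[of _ _ "butlast vs"]) auto
    qed
  next
    show "(\<lambda>vs. vs @ [i]) ` (\<Union>j\<in>J. Pset j m) \<subseteq> Pset i (Suc m)"
    proof
      fix ws assume "ws \<in> (\<lambda>vs. vs @ [i]) ` (\<Union>j\<in>J. Pset j m)"
      then obtain vs j where vs: "vs \<in> Pset j m" "j \<in> J" "ws = vs @ [i]" by auto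
      from dpath_extend[of N A c j vs i] vs notin[OF vs(1)] i
      show "ws \<in> Pset i (Suc m)" unfolding Pset_def J_def by auto
    qed
  qed
  have inj: "inj_on (\<lambda>vs. vs @ [i]) X" for X by (auto simp: inj_on_def)
  have disj: "Pset j m \<inter> Pset j' m = {}" if "j \<noteq> j'" for j j'
    using that unfolding Pset_def is_dpath_def by auto
  have "fw (Suc m) i = (\<Sum>vs\<in>(\<Union>j\<in>J. Pset j m). path_weight A (vs @ [i]))"
    unfolding fw_def seteq by (subst sum.reindex[OF inj]) simp
  also have "\<dots> = (\<Sum>j\<in>J. \<Sum>vs\<in>Pset j m. path_weight A (vs @ [i]))"
    by (rule sum.UNION_disjoint) (use finJ Pset_finite disj in auto)
  also have "\<dots> = (\<Sum>j\<in>J. \<Sum>vs\<in>Pset j m. A $$ (i, j) * path_weight A vs)"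
  proof (intro sum.cong refl)
    fix j vs assume "j \<in> J" "vs \<in> Pset j m"
    with dpath_extend[of N A c j vs i] notin i show "path_weight A (vs @ [i]) = A $$ (i, j) * path_weight A vs"
      unfolding Pset_def J_def by auto
  qed
  also have "\<dots> = (\<Sum>j\<in>J. A $$ (i, j) * fw m j)"
    unfolding fw_def by (simp add: sum_distrib_left)
  also have "\<dots> = (\<Sum>j<N. A $$ (i, j) * fw m j)"
  proof (rule sum.mono_neutral_left)
    show "\<forall>j\<in>{..<N} - J. A $$ (i, j) * fw m j = 0"
      using A_nonneg i unfolding J_def by (auto simp: order.order_iff_strict)
  qed (auto simp: J_def)
  finally show ?thesis .
qed

lemma pow_entry:
  "i < N \<Longrightarrow> \<forall>vs. is_dpath N A c i vs \<longrightarrow> path_len vs \<ge> m \<Longrightarrow>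
   ((- laplacian A) ^\<^sub>m m) $$ (i, c) = fw m i"
proof (induction m arbitrary: i)
  case 0
  have LC: "- laplacian A \<in> carrier_mat N N" using laplacian_carrier[OF A_dim] by simp
  have P0: "Pset i 0 = (if i = c then {[c]} else {})"
    unfolding Pset_def is_dpath_def path_len_def using c_lt
    by (auto simp: length_Suc_conv le_Suc_eq Suc_le_eq)
  show ?case using LC 0 c_lt P0 by (auto simp: fw_def path_weight_def)
next
  case (Suc m)
  define L where "L = laplacian A"
  have LC: "L \<in> carrier_mat N N" using laplacian_carrier[OF A_dim] unfolding L_def .
  define Bm where "Bm = (- L) ^\<^sub>m m"
  have BmC: "Bm \<in> carrier_mat N N" unfolding Bm_def using LC by simp
  have "((- L) ^\<^sub>m Suc m) $$ (i, c) = ((- L) * Bm) $$ (i, c)"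
    unfolding Bm_def using pow_mat_Suc_left[of "- L" N m] LC by simp
  also have "\<dots> = (\<Sum>j<N. (- L) $$ (i, j) * Bm $$ (j, c))"
    using LC BmC Suc.prems(1) c_lt by (intro mult_entry) auto
  also have "\<dots> = (\<Sum>j<N. A $$ (i, j) * Bm $$ (j, c)) - (\<Sum>k<N. A $$ (i, k)) * Bm $$ (i, c)"
  proof -
    have "(\<Sum>j<N. (- L) $$ (i, j) * Bm $$ (j, c)) =
       (\<Sum>j<N. A $$ (i, j) * Bm $$ (j, c) - (if i = j then (\<Sum>k<N. A $$ (i, k)) * Bm $$ (j, c) else 0))"
      using LC Suc.prems(1) unfolding L_def
      by (intro sum.cong refl) (auto simp: laplacian_index[OF A_dim] algebra_simps)
    also have "\<dots> = (\<Sum>j<N. A $$ (i, j) * Bm $$ (j, c)) - (\<Sum>k<N. A $$ (i, k)) * Bm $$ (i, c)"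
      using Suc.prems(1) by (simp add: sum_subtractf)
    finally show ?thesis .
  qed
  also have "Bm $$ (i, c) = 0"
  proof -
    have "Bm $$ (i, c) = fw m i" unfolding Bm_def L_def using Suc.prems by (intro Suc.IH) auto
    also have "Pset i m = {}" using Suc.prems(2) unfolding Pset_def by fastforce
    hence "fw m i = 0" unfolding fw_def by simp
    finally show ?thesis .
  qed
  also have "(\<Sum>j<N. A $$ (i, j) * Bm $$ (j, c)) = (\<Sum>j<N. A $$ (i, j) * fw m j)"
  proof (intro sum.cong refl)
    fix j assume j: "j \<in> {..<N}"
    show "A $$ (i, j) * Bm $$ (j, c) = A $$ (i, j) * fw m j"
    proof (cases "A $$ (i, j) > 0")
      case False then show ?thesis using A_nonneg j Suc.prems(1) by (auto simp: order.order_iff_strict)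
    next
      case pos: True
      have "\<forall>vs. is_dpath N A c j vs \<longrightarrow> path_len vs \<ge> m"
      proof (intro allI impI)
        fix vs assume vs: "is_dpath N A c j vs"
        show "path_len vs \<ge> m"
        proof (rule ccontr)
          assume lt: "\<not> m \<le> path_len vs"
          have "i \<notin> set vs"
            using dpath_notin[OF vs, of i] Suc.prems(2) lt by fastforce
          from dpath_extend[OF vs Suc.prems(1) this pos] Suc.prems(2) lt show False by fastforce
        qed
      qed
      then show ?thesis unfolding Bm_def L_def using j by (subst Suc.IH) auto
    qed
  qed
  also have "(\<Sum>j<N. A $$ (i, j) * fw m j) = fw (Suc m) i"
    using Suc.prems by (intro fw_rec[symmetric]) fastforce+
  finally show ?case unfolding L_def by simp
qed

end




lemma sI_plus_carrier: "L \<in> carrier_mat N N \<Longrightarrow> sI_plus L \<in> carrier_mat N N"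
  unfolding sI_plus_def by auto

lemma sI_plus_index: "L \<in> carrier_mat N N \<Longrightarrow> i < N \<Longrightarrow> j < N \<Longrightarrow>
  sI_plus L $$ (i, j) = (if i = j then [:0,1:] else 0) + [:L $$ (i, j):]"
  unfolding sI_plus_def by auto

lemma det_sI_plus: assumes "L \<in> carrier_mat N N" shows "det (sI_plus L) = char_poly (- L)"
proof -
  have "sI_plus L = char_poly_matrix (- L)"
    unfolding sI_plus_def char_poly_matrix_def using assms by (intro eq_matI) auto
  thus ?thesis unfolding char_poly_def by simp
qed

lemma coeff_rec:
  assumes L: "L \<in> carrier_mat N N" and ij: "i < N" "j < N"
  shows "coeff (adj_mat (sI_plus L) $$ (i, j)) m
     + (\<Sum>k<N. L $$ (i, k) * coeff (adj_mat (sI_plus L) $$ (k, j)) (Suc m))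
     = (if i = j then coeff (det (sI_plus L)) (Suc m) else 0)"
proof -
  define P where "P = sI_plus L"
  define H where "H = adj_mat P"
  have PC: "P \<in> carrier_mat N N" unfolding P_def using sI_plus_carrier[OF L] .
  have HC: "H \<in> carrier_mat N N" unfolding H_def using adj_mat(1)[OF PC] .
  have "(P * H) $$ (i, j) = (det P \<cdot>\<^sub>m 1\<^sub>m N) $$ (i, j)" unfolding H_def using adj_mat(2)[OF PC] by simp
  hence eq: "(\<Sum>k<N. P $$ (i, k) * H $$ (k, j)) = (if i = j then det P else 0)"
    using mult_entry[OF PC HC ij] ij by simp
  have "coeff (\<Sum>k<N. P $$ (i, k) * H $$ (k, j)) (Suc m)
      = (\<Sum>k<N. (if i = k then coeff (H $$ (k, j)) m else 0) + L $$ (i, k) * coeff (H $$ (k, j)) (Suc m))"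
    unfolding coeff_sum
    by (intro sum.cong refl) (use ij L in \<open>auto simp: P_def sI_plus_index distrib_right\<close>)
  also have "\<dots> = coeff (H $$ (i, j)) m + (\<Sum>k<N. L $$ (i, k) * coeff (H $$ (k, j)) (Suc m))"
    using ij by (simp add: sum.distrib)
  finally have X: "coeff (\<Sum>k<N. P $$ (i, k) * H $$ (k, j)) (Suc m) = coeff (H $$ (i, j)) m + (\<Sum>k<N. L $$ (i, k) * coeff (H $$ (k, j)) (Suc m))" .
  show ?thesis using X unfolding eq unfolding H_def P_def by (cases "i = j") auto
qed

context
  fixes N :: nat and L :: "real mat"
  assumes L: "L \<in> carrier_mat N N"
begin

definition cc :: "nat \<Rightarrow> nat \<Rightarrow> nat \<Rightarrow> real" where
  "cc m i j = coeff (adj_mat (sI_plus L) $$ (i, j)) m"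

definition ee :: "nat \<Rightarrow> real" where
  "ee m = coeff (det (sI_plus L)) m"

lemma deg_det: "degree (det (sI_plus L)) = N" "ee N = 1"
  using degree_monic_char_poly[of "- L" N] L unfolding det_sI_plus[OF L] ee_def by auto

lemma ee_high: "m > N \<Longrightarrow> ee m = 0"
  unfolding ee_def using deg_det(1) by (simp add: coeff_eq_0)

lemma cc_rec: "i < N \<Longrightarrow> j < N \<Longrightarrow>
  cc m i j = (if i = j then ee (Suc m) else 0) - (\<Sum>k<N. L $$ (i, k) * cc (Suc m) k j)"
  using coeff_rec[OF L, of i j m] unfolding cc_def ee_def by linarith

lemma cc_high: "N \<le> m \<Longrightarrow> i < N \<Longrightarrow> j < N \<Longrightarrow> cc m i j = 0"
proof -
  define K where "K = Suc (\<Sum>i<N. \<Sum>j<N. degree (adj_mat (sI_plus L) $$ (i, j)))"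
  have big: "cc m i j = 0" if "K \<le> m" "i < N" "j < N" for m i j
  proof -
    have "degree (adj_mat (sI_plus L) $$ (i, j)) \<le> (\<Sum>j<N. degree (adj_mat (sI_plus L) $$ (i, j)))"
      using that by (intro member_le_sum) auto
    also have "\<dots> \<le> (\<Sum>i<N. \<Sum>j<N. degree (adj_mat (sI_plus L) $$ (i, j)))"
      using that by (intro member_le_sum[of i "{..<N}" "\<lambda>i. \<Sum>j<N. degree (adj_mat (sI_plus L) $$ (i, j))"]) auto
    finally show ?thesis using that unfolding cc_def K_def by (intro coeff_eq_0) auto
  qed
  have main: "\<forall>m. N \<le> m \<longrightarrow> K \<le> m + t \<longrightarrow> (\<forall>i<N. \<forall>j<N. cc m i j = 0)" for t
  proof (induction t)
    case 0 then show ?case using big by auto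
  next
    case (Suc t)
    show ?case
    proof (intro allI impI)
      fix m i j assume m: "N \<le> m" "K \<le> m + Suc t" and ij: "i < N" "j < N"
      show "cc m i j = 0"
      proof (cases "K \<le> m + t")
        case True then show ?thesis using Suc.IH m ij by auto
      next
        case False
        hence z: "\<forall>i<N. \<forall>j<N. cc (Suc m) i j = 0" using Suc.IH m by auto
        have "(\<Sum>k<N. L $$ (i, k) * cc (Suc m) k j) = 0" using z ij by (intro sum.neutral) auto
        then show ?thesis using cc_rec[OF ij, of m] ee_high[of "Suc m"] m by auto
      qed
    qed
  qed
  show "N \<le> m \<Longrightarrow> i < N \<Longrightarrow> j < N \<Longrightarrow> cc m i j = 0" using main[of K] by auto
qed

lemma cc_formula:
  "k < N \<Longrightarrow> i < N \<Longrightarrow> j < N \<Longrightarrow>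
   cc (N - 1 - k) i j = (\<Sum>l\<le>k. ee (N - l) * ((- L) ^\<^sub>m (k - l)) $$ (i, j))"
proof (induction k arbitrary: i j)
  case 0
  have "cc (N - 1) i j = (if i = j then ee N else 0)"
    using cc_rec[OF 0(2,3), of "N - 1"] cc_high[of N] 0 by simp
  then show ?case using 0 L deg_det(2) by simp
next
  case (Suc k)
  have BC: "- L \<in> carrier_mat N N" using L by simp
  have e1: "Suc (N - 1 - Suc k) = N - 1 - k" using Suc.prems by simp
  have "cc (N - 1 - Suc k) i j = (if i = j then ee (N - Suc k) else 0)
      - (\<Sum>t<N. L $$ (i, t) * (\<Sum>l\<le>k. ee (N - l) * ((- L) ^\<^sub>m (k - l)) $$ (t, j)))"
    using cc_rec[OF Suc.prems(2,3), of "N - 1 - Suc k"] Suc.IH Suc.prems unfolding e1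
    by (simp add: Suc_diff_Suc)
  also have "(\<Sum>t<N. L $$ (i, t) * (\<Sum>l\<le>k. ee (N - l) * ((- L) ^\<^sub>m (k - l)) $$ (t, j)))
     = (\<Sum>l\<le>k. ee (N - l) * (\<Sum>t<N. L $$ (i, t) * ((- L) ^\<^sub>m (k - l)) $$ (t, j)))"
    by (simp add: sum_distrib_left sum.swap[of _ "{..<N}"] mult.left_commute)
  also have "\<dots> = - (\<Sum>l\<le>k. ee (N - l) * ((- L) ^\<^sub>m (Suc k - l)) $$ (i, j))"
  proof -
    have pw: "((- L) ^\<^sub>m (Suc k - l)) $$ (i, j) = - (\<Sum>t<N. L $$ (i, t) * ((- L) ^\<^sub>m (k - l)) $$ (t, j))"
      if "l \<le> k" for l
    proof -
      have "((- L) ^\<^sub>m (Suc k - l)) = (- L) * (- L) ^\<^sub>m (k - l)"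
        using that pow_mat_Suc_left[OF BC, of "k - l"] by (simp add: Suc_diff_le)
      hence "((- L) ^\<^sub>m (Suc k - l)) $$ (i, j) = (\<Sum>t<N. (- L) $$ (i, t) * ((- L) ^\<^sub>m (k - l)) $$ (t, j))"
        using mult_entry[OF BC pow_carrier_mat[OF BC] Suc.prems(2,3)] by simp
      also have "\<dots> = - (\<Sum>t<N. L $$ (i, t) * ((- L) ^\<^sub>m (k - l)) $$ (t, j))"
        using L Suc.prems by (simp add: sum_negf[symmetric])
      finally show ?thesis .
    qed
    show ?thesis
      apply (subst sum_negf[symmetric])
      apply (intro sum.cong refl)
      using pw by simp
  qed
  finally have "cc (N - 1 - Suc k) i j = (if i = j then ee (N - Suc k) else 0)
      + (\<Sum>l\<le>k. ee (N - l) * ((- L) ^\<^sub>m (Suc k - l)) $$ (i, j))" by simp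
  also have "(if i = j then ee (N - Suc k) else 0) = ee (N - Suc k) * ((- L) ^\<^sub>m (Suc k - Suc k)) $$ (i, j)"
    using Suc.prems L by simp
  finally show ?case by (simp add: add.commute)
qed

end




lemma degree_part:
  fixes N :: nat and A :: "real mat" and c d :: nat
  assumes A_dim: "A \<in> carrier_mat N N"
    and A_nonneg: "\<forall>i<N. \<forall>j<N. A $$ (i, j) \<ge> 0"
    and co: "c < N" "d < N"
    and reach: "\<exists>vs. is_dpath N A c d vs"
  defines "\<delta> \<equiv> shortest_dist N A c d"
    and "\<theta> \<equiv> shortest_weight_sum N A c d"
    and "h \<equiv> adj_mat (sI_plus (laplacian A)) $$ (d, c)"
  shows "degree h = N - 1 - \<delta> \<and> lead_coeff h = \<theta> \<and> \<theta> > 0 \<and> \<delta> < N"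
proof -
  define L where "L = laplacian A"
  have LC: "L \<in> carrier_mat N N" unfolding L_def using laplacian_carrier[OF A_dim] .
  note fwd = fw_def[OF A_dim A_nonneg co(1)]
  note Psd = Pset_def[OF A_dim A_nonneg co(1)]
  have ex: "\<exists>l vs. is_dpath N A c d vs \<and> path_len vs = l" using reach by auto
  obtain p0 where p0: "is_dpath N A c d p0" "path_len p0 = \<delta>"
    using LeastI_ex[OF ex] unfolding \<delta>_def shortest_dist_def by auto
  have ge: "path_len vs \<ge> \<delta>" if "is_dpath N A c d vs" for vs
    unfolding \<delta>_def shortest_dist_def using that by (intro Least_le) auto
  have dN: "\<delta> < N" using p0 dpath_len_le[OF p0(1)] co unfolding path_len_def by auto
  have th: "\<theta> = fw N A c \<delta> d"
    unfolding \<theta>_def shortest_weight_sum_def \<delta>_def by (simp add: fwd Psd)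
  have pos: "\<theta> > 0"
  proof -
    have "path_weight A vs > 0" if "vs \<in> Pset N A c d \<delta>" for vs
      using that unfolding Psd is_dpath_def path_weight_def by (auto intro!: prod_pos)
    moreover have "p0 \<in> Pset N A c d \<delta>" using p0 unfolding Psd by auto
    ultimately show ?thesis unfolding th fwd
      by (intro sum_pos Pset_finite[OF A_dim A_nonneg co(1)]) auto
  qed
  have pe: "((- L) ^\<^sub>m m) $$ (d, c) = fw N A c m d" if "m \<le> \<delta>" for m
  proof -
    have "\<forall>vs. is_dpath N A c d vs \<longrightarrow> m \<le> path_len vs" using ge that by (meson le_trans)
    thus ?thesis unfolding L_def by (rule pow_entry[OF A_dim A_nonneg co(1) co(2)])
  qed
  have pz: "((- L) ^\<^sub>m m) $$ (d, c) = 0" if "m < \<delta>" for m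
  proof -
    have "Pset N A c d m = {}" using ge that unfolding Psd by fastforce
    thus ?thesis using pe[of m] that unfolding fwd by simp
  qed
  have hc: "coeff h m = cc L m d c" for m unfolding h_def L_def using cc_def[OF LC[unfolded L_def]] by simp
  have high: "coeff h m = 0" if "N \<le> m" for m
    unfolding hc using cc_high[OF LC that co(2,1)] .
  have low: "coeff h (N - 1 - k) = 0" if "k < \<delta>" for k
  proof -
    have "coeff h (N - 1 - k) = (\<Sum>l\<le>k. ee L (N - l) * ((- L) ^\<^sub>m (k - l)) $$ (d, c))"
      unfolding hc using cc_formula[OF LC _ co(2,1), of k] that dN by simp
    also have "\<dots> = 0" using pz that by (intro sum.neutral) auto
    finally show ?thesis .
  qed
  have top: "coeff h (N - 1 - \<delta>) = \<theta>"
  proof -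
    have "coeff h (N - 1 - \<delta>) = (\<Sum>l\<le>\<delta>. ee L (N - l) * ((- L) ^\<^sub>m (\<delta> - l)) $$ (d, c))"
      unfolding hc using cc_formula[OF LC dN co(2,1)] by simp
    also have "\<dots> = ee L (N - 0) * ((- L) ^\<^sub>m (\<delta> - 0)) $$ (d, c)
       + (\<Sum>l\<in>{..\<delta>} - {0}. ee L (N - l) * ((- L) ^\<^sub>m (\<delta> - l)) $$ (d, c))"
      by (subst sum.remove[of _ 0]) auto
    also have "(\<Sum>l\<in>{..\<delta>} - {0}. ee L (N - l) * ((- L) ^\<^sub>m (\<delta> - l)) $$ (d, c)) = 0"
      using pz by (intro sum.neutral) auto
    also have "ee L (N - 0) * ((- L) ^\<^sub>m (\<delta> - 0)) $$ (d, c) = \<theta>"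
      using deg_det(2)[OF LC] pe[of \<delta>] th by simp
    finally show ?thesis by simp
  qed
  have dle: "degree h \<le> N - 1 - \<delta>"
  proof (rule degree_le, intro allI impI)
    fix m assume m: "N - 1 - \<delta> < m"
    show "coeff h m = 0"
    proof (cases "N \<le> m")
      case True then show ?thesis using high by auto
    next
      case False
      hence "m = N - 1 - (N - 1 - m)" "N - 1 - m < \<delta>" using m by auto
      then show ?thesis using low by metis
    qed
  qed
  have dge: "N - 1 - \<delta> \<le> degree h" using top pos by (intro le_degree) auto
  have "degree h = N - 1 - \<delta>" using dle dge by simp
  thus ?thesis using top pos dN by simp
qed




definition kap :: "complex \<Rightarrow> complex poly fract" where
  "kap z = cf [:z:]"

lemma kap_hom: "comm_ring_hom kap"
  by unfold_locales (auto simp: kap_def cf_def One_fract_def Zero_fract_def one_pCons mult.commute)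

definition evc :: "complex poly fract \<Rightarrow> complex poly \<Rightarrow> complex poly fract" where
  "evc x f = poly (map_poly kap f) x"

definition evr :: "complex poly fract \<Rightarrow> real poly \<Rightarrow> complex poly fract" where
  "evr x f = poly (map_poly (\<lambda>r. kap (complex_of_real r)) f) x"

lemma rho_hom: "comm_ring_hom (\<lambda>r. kap (complex_of_real r))"
proof -
  interpret comm_ring_hom kap by (rule kap_hom)
  show ?thesis by unfold_locales (auto simp: hom_distribs)
qed

lemma ev_hom: assumes "comm_ring_hom h" shows "comm_ring_hom (\<lambda>f. poly (map_poly h f) x)"
proof -
  interpret h: comm_ring_hom h by fact
  interpret m: map_poly_comm_ring_hom h ..
  show ?thesis by unfold_locales (simp_all add: m.hom_add m.hom_mult)
qed

lemma evc_hom: "comm_ring_hom (evc x)"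
  unfolding evc_def[abs_def] by (rule ev_hom[OF kap_hom])

lemma evr_hom: "comm_ring_hom (evr x)"
  unfolding evr_def[abs_def] by (rule ev_hom[OF rho_hom])

lemma evr_evc: "evr x f = evc x (map_poly complex_of_real f)"
  unfolding evr_def evc_def
  by (subst map_poly_map_poly) (auto simp: kap_def cf_def Zero_fract_def o_def)

lemma map_const: "map_poly complex_of_real [:r:] = [:complex_of_real r:]"
  by (rule poly_eqI) (simp add: coeff_map_poly coeff_pCons split: nat.split)

lemma rf_kap: "rf [:r:] = kap (complex_of_real r)"
  unfolding rf_def kap_def cf_def map_const ..

lemma rf_evc: "rf f = cf (map_poly complex_of_real f)"
  unfolding rf_def cf_def ..

lemma cf_eq_0: "cf f = 0 \<longleftrightarrow> f = 0"
  unfolding cf_def by (simp add: Zero_fract_def eq_fract)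

lemma rf_eq_0: "rf f = 0 \<longleftrightarrow> f = 0"
  unfolding rf_evc cf_eq_0 by simp

lemma map_poly_const: "h 0 = 0 \<Longrightarrow> map_poly h [:r:] = [:h r:]"
  by (rule poly_eqI) (simp add: coeff_map_poly coeff_pCons split: nat.split)

lemma map_poly_X: "h 0 = 0 \<Longrightarrow> map_poly h [:0, r:] = [:0, h r:]"
  by (rule poly_eqI) (simp add: coeff_map_poly coeff_pCons split: nat.split)

lemma kap0: "kap 0 = 0" unfolding kap_def cf_def by (simp add: Zero_fract_def)
lemma kap1: "kap 1 = 1" unfolding kap_def cf_def by (simp add: One_fract_def one_pCons)

lemma evr_const: "evr x [:r:] = rf [:r:]"
  unfolding evr_def rf_kap by (subst map_poly_const) (auto simp: kap0)

lemma evr_X: "evr x [:0, 1:] = x"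
  unfolding evr_def by (subst map_poly_X) (auto simp: kap0 kap1)

lemma evr_lin: "evr x (pCons a 1) = x + rf [:a:]"
proof -
  interpret e: comm_ring_hom "evr x" by (rule evr_hom)
  have eq: "pCons a 1 = [:a:] + [:0, 1:]" by (simp add: one_pCons)
  show ?thesis unfolding eq e.hom_add evr_const evr_X by (simp add: add.commute)
qed

lemma eval_mats:
  assumes L: "L \<in> carrier_mat N N"
  shows "map_mat (evr x) (sI_plus L) = x \<cdot>\<^sub>m 1\<^sub>m N + map_mat (\<lambda>r. rf [:r:]) L"
    "map_mat (evr x) (sI_plus L) * map_mat (evr x) (adj_mat (sI_plus L)) = evr x (det (sI_plus L)) \<cdot>\<^sub>m 1\<^sub>m N"
    "map_mat (evr x) (adj_mat (sI_plus L)) * map_mat (evr x) (sI_plus L) = evr x (det (sI_plus L)) \<cdot>\<^sub>m 1\<^sub>m N"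
    "det (map_mat (evr x) (sI_plus L)) = evr x (det (sI_plus L))"
proof -
  interpret e: comm_ring_hom "evr x" by (rule evr_hom)
  have PC: "sI_plus L \<in> carrier_mat N N" unfolding sI_plus_def using L by auto
  have HC: "adj_mat (sI_plus L) \<in> carrier_mat N N" using adj_mat(1)[OF PC] .
  have sm: "map_mat (evr x) (a \<cdot>\<^sub>m 1\<^sub>m N) = evr x a \<cdot>\<^sub>m 1\<^sub>m N" for a
    by (rule eq_matI) auto
  show "map_mat (evr x) (sI_plus L) = x \<cdot>\<^sub>m 1\<^sub>m N + map_mat (\<lambda>r. rf [:r:]) L"
    by (rule eq_matI) (use L in \<open>auto simp: sI_plus_def evr_const evr_X evr_lin\<close>)
  show "map_mat (evr x) (sI_plus L) * map_mat (evr x) (adj_mat (sI_plus L)) = evr x (det (sI_plus L)) \<cdot>\<^sub>m 1\<^sub>m N"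
    using e.mat_hom_mult[OF PC HC] adj_mat(2)[OF PC] sm by simp
  show "map_mat (evr x) (adj_mat (sI_plus L)) * map_mat (evr x) (sI_plus L) = evr x (det (sI_plus L)) \<cdot>\<^sub>m 1\<^sub>m N"
    using e.mat_hom_mult[OF HC PC] adj_mat(3)[OF PC] sm by simp
  show "det (map_mat (evr x) (sI_plus L)) = evr x (det (sI_plus L))" by simp
qed

lemma rf_neg: "rf [:- a:] = - rf [:a:]"
proof -
  interpret comm_ring_hom kap by (rule kap_hom)
  show ?thesis unfolding rf_kap by (simp add: hom_distribs)
qed

lemma kap_neg: "kap (- a) = - kap a"
proof -
  interpret comm_ring_hom kap by (rule kap_hom)
  show ?thesis by (simp add: hom_distribs)
qed

lemma evc_lin: "evc y [:c, 1:] = y + kap c"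
proof -
  interpret e: comm_ring_hom "evc y" by (rule evc_hom)
  have eq: "[:c, 1:] = [:c:] + [:0, 1:]" by simp
  have 1: "evc y [:c:] = kap c" unfolding evc_def by (subst map_poly_const) (auto simp: kap0)
  have 2: "evc y [:0, 1:] = y" unfolding evc_def by (subst map_poly_X) (auto simp: kap0 kap1)
  show ?thesis unfolding eq e.hom_add 1 2 by (simp add: add.commute)
qed

lemma evc_prod: "evc y (\<Prod>l\<leftarrow>ls. [:f l, 1:]) = (\<Prod>l\<leftarrow>ls. y + kap (f l))"
proof (induction ls)
  case Nil
  interpret e: comm_ring_hom "evc y" by (rule evc_hom)
  show ?case by simp
next
  case (Cons a ls)
  interpret e: comm_ring_hom "evc y" by (rule evc_hom)
  have "evc y (\<Prod>l\<leftarrow>a#ls. [:f l, 1:]) = evc y ([:f a, 1:] * (\<Prod>l\<leftarrow>ls. [:f l, 1:]))" by simp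
  also have "... = (y + kap (f a)) * (\<Prod>l\<leftarrow>ls. y + kap (f l))" unfolding e.hom_mult evc_lin Cons.IH ..
  finally show ?case by simp
qed

lemma neg_prod: "(- 1) ^ length ls * (\<Prod>l\<leftarrow>ls. - x + kap (- l)) = (\<Prod>l\<leftarrow>ls. x + kap l)"
  by (induction ls) (auto simp: kap_neg algebra_simps)

lemma det_eval:
  assumes L: "L \<in> carrier_mat N N"
    and cp: "map_poly complex_of_real (char_poly L) = (\<Prod>l\<leftarrow>ls. [:- l, 1:])"
  shows "evr x (det (sI_plus L)) = (\<Prod>l\<leftarrow>ls. x + kap l)" "length ls = N"
proof -
  interpret e: comm_ring_hom "evr (- x)" by (rule evr_hom)
  have "degree (map_poly complex_of_real (char_poly L)) = N"
    using degree_monic_char_poly[OF L] by (subst degree_map_poly) auto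
  thus len: "length ls = N" unfolding cp using degree_linear_factors[of uminus ls] by simp
  define Y where "Y = x \<cdot>\<^sub>m 1\<^sub>m N + map_mat (\<lambda>r. rf [:r:]) L"
  have YC: "Y \<in> carrier_mat N N" unfolding Y_def using L by auto
  have "map_mat (evr (- x)) (char_poly_matrix L) = (- 1) \<cdot>\<^sub>m Y"
    by (rule eq_matI) (use L in \<open>auto simp: Y_def char_poly_matrix_def evr_const evr_X evr_lin rf_neg\<close>)
  hence h0: "evr (- x) (char_poly L) = (- 1) ^ N * det Y"
    unfolding char_poly_def e.hom_det[symmetric] using YC by simp
  have h2: "evr (- x) (char_poly L) = (\<Prod>l\<leftarrow>ls. - x + kap (- l))"
    unfolding evr_evc cp evc_prod ..
  have sq: "((- 1 :: complex poly fract) ^ N) * (- 1) ^ N = 1"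
    by (simp add: power_mult_distrib[symmetric])
  have "det Y = (((- 1) ^ N) * (- 1) ^ N) * det Y" using sq by simp
  also have "\<dots> = (- 1) ^ N * ((- 1) ^ N * det Y)" by (simp only: mult.assoc)
  also have "\<dots> = (- 1) ^ N * (\<Prod>l\<leftarrow>ls. - x + kap (- l))" using h0 h2 by simp
  also have "\<dots> = (\<Prod>l\<leftarrow>ls. x + kap l)" using neg_prod[of ls x] len by simp
  finally show "evr x (det (sI_plus L)) = (\<Prod>l\<leftarrow>ls. x + kap l)"
    using eval_mats[OF L, of x] unfolding Y_def by simp
qed




lemma prod_div: "v \<noteq> 0 \<Longrightarrow> (\<Prod>g\<leftarrow>gs. u / v + f g) = (\<Prod>g\<leftarrow>gs. u + f g * v) / v ^ length gs"
  for v :: "'a :: field"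
  by (induction gs) (auto simp: field_simps)

lemma final_alg:
  fixes v :: "'a :: field"
  assumes v: "v \<noteq> 0" and len: "length gs = k" "length ls = k + (1 + \<delta>)"
  shows "t * (\<Prod>g\<leftarrow>gs. u / v + f g) / (\<Prod>l\<leftarrow>ls. u / v + f l)
     = t * v ^ (1 + \<delta>) * (\<Prod>g\<leftarrow>gs. u + f g * v) / (\<Prod>l\<leftarrow>ls. u + f l * v)"
proof -
  define Pg where "Pg = (\<Prod>g\<leftarrow>gs. u + f g * v)"
  define Pl where "Pl = (\<Prod>l\<leftarrow>ls. u + f l * v)"
  have "t * (\<Prod>g\<leftarrow>gs. u / v + f g) / (\<Prod>l\<leftarrow>ls. u / v + f l) = t * (Pg / v ^ k) / (Pl / v ^ (k + (1 + \<delta>)))"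
    unfolding Pg_def Pl_def using prod_div[OF v, of u f gs] prod_div[OF v, of u f ls] len by simp
  also have "\<dots> = t * v ^ (1 + \<delta>) * Pg / Pl"
  proof (cases "Pl = 0")
    case True then show ?thesis by simp
  next
    case False
    have vk: "v ^ k \<noteq> 0" using v by simp
    have pw: "v ^ (k + (1 + \<delta>)) = v ^ k * v ^ (1 + \<delta>)" by (rule power_add)
    show ?thesis unfolding pw using vk v False by (simp add: divide_simps)
  qed
  finally show ?thesis unfolding Pg_def Pl_def .
qed

theorem theorem1:
  fixes N :: nat and A :: "real mat" and a b p q :: "real poly" and c d :: nat
  assumes A_dim: "A \<in> carrier_mat N N"
    and A_nonneg: "\<forall>i<N. \<forall>j<N. A $$ (i, j) \<ge> 0"
    and A_noloop: "\<forall>i<N. A $$ (i, i) = 0"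
    and nz: "a \<noteq> 0" "b \<noteq> 0" "p \<noteq> 0" "q \<noteq> 0"
    and co: "c < N" "d < N"
    and reach: "\<exists>vs. is_dpath N A c d vs"
  defines "L \<equiv> laplacian A"
    and "\<delta> \<equiv> shortest_dist N A c d"
    and "\<theta> \<equiv> shortest_weight_sum N A c d"
    and "h \<equiv> adj_mat (sI_plus (laplacian A)) $$ (d, c)"
    and "M \<equiv> rf (b * q) / rf (a * p)"
  shows "degree h = N - 1 - \<delta> \<and> lead_coeff h = \<theta> \<and>
    (\<exists>gs :: complex list. length gs = N - 1 - \<delta> \<and>
       map_poly complex_of_real h = Polynomial.smult (complex_of_real \<theta>) (\<Prod>g\<leftarrow>gs. [:g, 1:]) \<and>
       (\<forall>ls :: complex list. map_poly complex_of_real (char_poly L) = (\<Prod>l\<leftarrow>ls. [:-l, 1:]) \<longrightarrow>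
         (\<forall>X. X \<in> carrier_mat N N \<longrightarrow>
              (1\<^sub>m N + M \<cdot>\<^sub>m map_mat (\<lambda>x. rf [:x:]) L) * X = 1\<^sub>m N \<longrightarrow>
              unit_vec N d \<bullet> (X *\<^sub>v (M \<cdot>\<^sub>v unit_vec N c)) =
                rf [:\<theta>:] * rf (b * q) ^ (1 + \<delta>)
                  * (\<Prod>g\<leftarrow>gs. rf (a * p) + cf [:g:] * rf (b * q))
                  / (\<Prod>l\<leftarrow>ls. rf (a * p) + cf [:l:] * rf (b * q)))))"
proof -
  have LC: "L \<in> carrier_mat N N" unfolding L_def using laplacian_carrier[OF A_dim] .
  have dp: "degree h = N - 1 - \<delta> \<and> lead_coeff h = \<theta> \<and> \<theta> > 0 \<and> \<delta> < N"
    unfolding h_def \<delta>_def \<theta>_def by (rule degree_part[OF A_dim A_nonneg co reach])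
  define hc where "hc = map_poly complex_of_real h"
  have dhc: "degree hc = degree h" unfolding hc_def by (subst degree_map_poly) auto
  have "lead_coeff hc = coeff hc (degree h)" using dhc by simp
  also have "\<dots> = complex_of_real (lead_coeff h)" unfolding hc_def by (simp add: coeff_map_poly)
  finally have "lead_coeff hc = complex_of_real (lead_coeff h)" .
  moreover have lh: "lead_coeff h = \<theta>" using dp by blast
  ultimately have lhc: "lead_coeff hc = complex_of_real \<theta>" by simp
  obtain as where as: "Polynomial.smult (lead_coeff hc) (\<Prod>a\<leftarrow>as. [:- a, 1:]) = hc" "length as = degree hc"
    using fundamental_theorem_algebra_factorized[of hc] by blast
  define gs where "gs = map uminus as"
  have gs_len: "length gs = N - 1 - \<delta>" unfolding gs_def using as(2) dhc dp by simp
  have gs_prod: "(\<Prod>g\<leftarrow>gs. [:g, 1:]) = (\<Prod>a\<leftarrow>as. [:- a, 1:])"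
    unfolding gs_def by (simp add: o_def)
  have hfac: "map_poly complex_of_real h = Polynomial.smult (complex_of_real \<theta>) (\<Prod>g\<leftarrow>gs. [:g, 1:])"
    using as(1) lh unfolding gs_prod lhc hc_def by simp
  show ?thesis
  proof (intro conjI exI[of _ gs] allI impI)
    show "degree h = N - 1 - \<delta>" "lead_coeff h = \<theta>" using dp by auto
    show "length gs = N - 1 - \<delta>" by (rule gs_len)
    show "map_poly complex_of_real h = Polynomial.smult (complex_of_real \<theta>) (\<Prod>g\<leftarrow>gs. [:g, 1:])"
      by (rule hfac)
    fix ls :: "complex list" and X :: "complex poly fract mat"
    assume cp: "map_poly complex_of_real (char_poly L) = (\<Prod>l\<leftarrow>ls. [:- l, 1:])"
      and XC: "X \<in> carrier_mat N N"
      and Xinv: "(1\<^sub>m N + M \<cdot>\<^sub>m map_mat (\<lambda>x. rf [:x:]) L) * X = 1\<^sub>m N"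
    define u where "u = rf (a * p)"
    define v where "v = rf (b * q)"
    have u0: "u \<noteq> 0" unfolding u_def rf_eq_0 using nz by simp
    have v0: "v \<noteq> 0" unfolding v_def rf_eq_0 using nz by simp
    define x where "x = u / v"
    have Mx: "M * x = 1" unfolding M_def x_def u_def[symmetric] v_def[symmetric] using u0 v0 by simp
    define Lp where "Lp = map_mat (\<lambda>r. rf [:r:]) L"
    define Px where "Px = map_mat (evr x) (sI_plus L)"
    define Hx where "Hx = map_mat (evr x) (adj_mat (sI_plus L))"
    define dx where "dx = evr x (det (sI_plus L))"
    note em = eval_mats[OF LC, of x, folded Px_def Hx_def dx_def]
    have PC: "Px \<in> carrier_mat N N" unfolding Px_def using sI_plus_carrier[OF LC] by simp
    have HC: "Hx \<in> carrier_mat N N" unfolding Hx_def using adj_mat(1)[OF sI_plus_carrier[OF LC]] by simp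
    have eq1: "1\<^sub>m N + M \<cdot>\<^sub>m Lp = M \<cdot>\<^sub>m Px"
    proof (rule eq_matI)
      fix i j assume ij: "i < dim_row (M \<cdot>\<^sub>m Px)" "j < dim_col (M \<cdot>\<^sub>m Px)"
      hence ij': "i < N" "j < N" using PC by auto
      show "(1\<^sub>m N + M \<cdot>\<^sub>m Lp) $$ (i, j) = (M \<cdot>\<^sub>m Px) $$ (i, j)"
        unfolding em(1) Lp_def using ij' LC Mx by (auto simp: algebra_simps)
    qed (use PC LC in \<open>auto simp: Lp_def\<close>)
    have inv: "(M \<cdot>\<^sub>m Px) * X = 1\<^sub>m N" using Xinv unfolding eq1[unfolded Lp_def] .
    have "det ((M \<cdot>\<^sub>m Px) * X) = det (M \<cdot>\<^sub>m Px) * det X"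
      by (rule det_mult[of _ N]) (use PC XC in auto)
    hence "M ^ N * dx * det X = 1" using inv PC em(4) by simp
    hence dx0: "dx \<noteq> 0" by auto
    have "Hx = Hx * ((M \<cdot>\<^sub>m Px) * X)" unfolding inv using HC by simp
    also have "\<dots> = (Hx * (M \<cdot>\<^sub>m Px)) * X" using HC PC XC by (simp add: assoc_mult_mat[of _ N N _ N _ N])
    also have "Hx * (M \<cdot>\<^sub>m Px) = M \<cdot>\<^sub>m (dx \<cdot>\<^sub>m 1\<^sub>m N)"
      using mult_smult_distrib[OF HC PC, of M] em(3) by simp
    also have "(M \<cdot>\<^sub>m (dx \<cdot>\<^sub>m 1\<^sub>m N)) * X = (M * dx) \<cdot>\<^sub>m X"
    proof -
      have "M \<cdot>\<^sub>m (dx \<cdot>\<^sub>m 1\<^sub>m N) = (M * dx) \<cdot>\<^sub>m 1\<^sub>m N" by (rule eq_matI) auto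
      hence "(M \<cdot>\<^sub>m (dx \<cdot>\<^sub>m 1\<^sub>m N)) * X = (M * dx) \<cdot>\<^sub>m (1\<^sub>m N * X)"
        using mult_smult_assoc_mat[OF one_carrier_mat XC] by simp
      thus ?thesis using XC by simp
    qed
    finally have HX: "Hx = (M * dx) \<cdot>\<^sub>m X" .
    have HXe: "Hx $$ (d, c) = M * dx * X $$ (d, c)" using HX XC co by (simp add: arg_cong[OF HX, of "\<lambda>A. A $$ (d, c)"])
    have "unit_vec N d \<bullet> (X *\<^sub>v (M \<cdot>\<^sub>v unit_vec N c)) = (X *\<^sub>v (M \<cdot>\<^sub>v unit_vec N c)) $ d"
      using XC co by (intro scalar_prod_left_unit) auto
    also have "\<dots> = M * X $$ (d, c)" using XC co by simp
    also have "\<dots> = Hx $$ (d, c) / dx" using HXe dx0 by (simp add: field_simps)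
    also have "Hx $$ (d, c) = evr x h" unfolding Hx_def h_def L_def using co LC[unfolded L_def]
      by (simp add: adj_mat_def sI_plus_def)
    also have "evr x h = kap (complex_of_real \<theta>) * (\<Prod>g\<leftarrow>gs. x + kap g)"
    proof -
      interpret e: comm_ring_hom "evc x" by (rule evc_hom)
      have "evc x [:complex_of_real \<theta>:] = kap (complex_of_real \<theta>)"
        unfolding evc_def by (subst map_poly_const) (auto simp: kap0)
      moreover have sm: "Polynomial.smult cc pp = [:cc:] * pp" for cc :: complex and pp by simp
      ultimately show ?thesis unfolding evr_evc hfac sm e.hom_mult evc_prod by simp
    qed
    also have "dx = (\<Prod>l\<leftarrow>ls. x + kap l)" unfolding dx_def by (rule det_eval(1)[OF LC cp])
    finally have lhs: "unit_vec N d \<bullet> (X *\<^sub>v (M \<cdot>\<^sub>v unit_vec N c)) =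
       kap (complex_of_real \<theta>) * (\<Prod>g\<leftarrow>gs. x + kap g) / (\<Prod>l\<leftarrow>ls. x + kap l)" .
    have lls: "length ls = N" by (rule det_eval(2)[OF LC cp])
    have "kap (complex_of_real \<theta>) * (\<Prod>g\<leftarrow>gs. u / v + kap g) / (\<Prod>l\<leftarrow>ls. u / v + kap l)
      = kap (complex_of_real \<theta>) * v ^ (1 + \<delta>) * (\<Prod>g\<leftarrow>gs. u + kap g * v) / (\<Prod>l\<leftarrow>ls. u + kap l * v)"
      by (rule final_alg[OF v0 gs_len]) (use lls dp in simp)
    thus "unit_vec N d \<bullet> (X *\<^sub>v (M \<cdot>\<^sub>v unit_vec N c)) =
                rf [:\<theta>:] * rf (b * q) ^ (1 + \<delta>)
                  * (\<Prod>g\<leftarrow>gs. rf (a * p) + cf [:g:] * rf (b * q))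
                  / (\<Prod>l\<leftarrow>ls. rf (a * p) + cf [:l:] * rf (b * q))"
      unfolding lhs x_def u_def v_def rf_kap kap_def by simp
  qed
qed



end
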